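(* Let $G$ be a cubic graph of order $2n$ and oddness $2$. Then $\chi'_{[n-1]}(G)=4$.
   Context: All graphs are finite, simple (no loops, no parallel edges), connected and cubic. The oddness of a cubic graph $G$ having a $2$-factor is the minimum, over all $2$-factors $F$ of $G$, of the number of odd-length circuits of $F$. For a positive integer $k$, a $[k]$-matching of $G$ is a matching of $G$ with exactly $k$ edges. The excessive $[k]$-index $\chi'_{[k]}(G)$ is the minimum number of $[k]$-matchings of $G$ whose union is $E(G)$; if some edge of $G$ lies in no $[k]$-matching, one sets $\chi'_{[k]}(G)=\infty$. *)

theory Defs
  imports "HOL-Library.Extended_Nat"
begin

definition simple_graph :: "'a set \<Rightarrow> 'a set set \<Rightarrow> bool" where
  "simple_graph V E \<longleftrightarrow> finite V \<and>
     (\<forall>e\<in>E. \<exists>u v. e = {u, v} \<and> u \<noteq> v \<and> u \<in> V \<and> v \<in> V)"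

definition adj :: "'a set set \<Rightarrow> ('a \<times> 'a) set" where
  "adj E = {(u, v). {u, v} \<in> E}"

definition connected_graph :: "'a set \<Rightarrow> 'a set set \<Rightarrow> bool" where
  "connected_graph V E \<longleftrightarrow> (\<forall>u\<in>V. \<forall>v\<in>V. (u, v) \<in> (adj E)\<^sup>*)"

definition degree :: "'a set set \<Rightarrow> 'a \<Rightarrow> nat" where
  "degree E v = card {e\<in>E. v \<in> e}"

definition cubic_graph :: "'a set \<Rightarrow> 'a set set \<Rightarrow> bool" where
  "cubic_graph V E \<longleftrightarrow> simple_graph V E \<and> connected_graph V E \<and>
     (\<forall>v\<in>V. degree E v = 3)"

definition two_factor :: "'a set \<Rightarrow> 'a set set \<Rightarrow> 'a set set \<Rightarrow> bool" where
  "two_factor V E F \<longleftrightarrow> F \<subseteq> E \<and> (\<forall>v\<in>V. degree F v = 2)"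

text \<open>The circuits of a 2-factor F are the connected components of (V, F),
  given by their vertex sets.\<close>
definition components :: "'a set \<Rightarrow> 'a set set \<Rightarrow> 'a set set" where
  "components V F = (\<lambda>v. {u\<in>V. (v, u) \<in> (adj F)\<^sup>*}) ` V"

definition odd_circuits :: "'a set \<Rightarrow> 'a set set \<Rightarrow> nat" where
  "odd_circuits V F = card {C \<in> components V F. odd (card C)}"

definition has_two_factor :: "'a set \<Rightarrow> 'a set set \<Rightarrow> bool" where
  "has_two_factor V E \<longleftrightarrow> (\<exists>F. two_factor V E F)"

definition oddness :: "'a set \<Rightarrow> 'a set set \<Rightarrow> nat" where
  "oddness V E = Min {odd_circuits V F | F. two_factor V E F}"

definition k_matching :: "'a set set \<Rightarrow> nat \<Rightarrow> 'a set set \<Rightarrow> bool" where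
  "k_matching E k M \<longleftrightarrow> M \<subseteq> E \<and> card M = k \<and>
     (\<forall>e\<in>M. \<forall>f\<in>M. e \<noteq> f \<longrightarrow> e \<inter> f = {})"

definition excessive_index :: "'a set set \<Rightarrow> nat \<Rightarrow> enat" where
  "excessive_index E k =
     (if \<forall>e\<in>E. \<exists>M. k_matching E k M \<and> e \<in> M
      then enat (LEAST m. \<exists>\<M>. finite \<M> \<and> card \<M> = m \<and>
                  (\<forall>M\<in>\<M>. k_matching E k M) \<and> \<Union>\<M> = E)
      else \<infinity>)"

end

theory Submission
  imports Defs
begin


definition gcomp :: "'a set set \<Rightarrow> 'a \<Rightarrow> 'a set" where
  "gcomp H v = {u. (v,u) \<in> (adj H)\<^sup>*}"
definition twosets :: "'a set set \<Rightarrow> bool" where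
  "twosets H \<longleftrightarrow> (\<forall>e\<in>H. \<exists>u v. e = {u,v} \<and> u \<noteq> v)"
definition matching :: "'a set set \<Rightarrow> bool" where
  "matching P \<longleftrightarrow> (\<forall>e\<in>P. \<forall>f\<in>P. e \<noteq> f \<longrightarrow> e \<inter> f = {})"
definition Hyp :: "'a set set \<Rightarrow> bool" where
  "Hyp H \<longleftrightarrow> (\<forall>w. (\<forall>y\<in>gcomp H w. degree H y = 2) \<longrightarrow> even (card (gcomp H w)))"

lemma adj_sym: "(u,v) \<in> adj H \<Longrightarrow> (v,u) \<in> adj H"
  by (simp add: adj_def insert_commute)

lemma rtrancl_adj_sym: "(u,v) \<in> (adj H)\<^sup>* \<Longrightarrow> (v,u) \<in> (adj H)\<^sup>*"
proof (induction rule: rtrancl_induct)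
  case base then show ?case by simp
next
  case (step y z)
  then show ?case using adj_sym by (meson converse_rtrancl_into_rtrancl)
qed

lemma comp_self: "v \<in> gcomp H v" by (simp add: gcomp_def)

lemma comp_step: "y \<in> gcomp H v \<Longrightarrow> {y,z} \<in> H \<Longrightarrow> z \<in> gcomp H v"
  unfolding gcomp_def by (auto simp: adj_def intro: rtrancl_into_rtrancl)

lemma comp_edge: "twosets H \<Longrightarrow> f \<in> H \<Longrightarrow> x \<in> f \<Longrightarrow> x \<in> gcomp H v \<Longrightarrow> f \<subseteq> gcomp H v"
proof -
  assume a: "twosets H" "f \<in> H" "x \<in> f" "x \<in> gcomp H v"
  then obtain u w where f: "f = {u,w}" unfolding twosets_def by blast
  show ?thesis
  proof
    fix z assume "z \<in> f"
    then show "z \<in> gcomp H v" using a f comp_step[of x H v] by (auto simp: insert_commute)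
  qed
qed

lemma comp_eq: "y \<in> gcomp H v \<Longrightarrow> gcomp H y = gcomp H v"
  unfolding gcomp_def using rtrancl_adj_sym rtrancl_trans by fast

lemma comp_nonself: "y \<in> gcomp H v \<Longrightarrow> y \<noteq> v \<Longrightarrow> \<exists>f\<in>H. y \<in> f"
proof -
  assume a: "y \<in> gcomp H v" "y \<noteq> v"
  then have "(v,y) \<in> (adj H)\<^sup>*" by (simp add: gcomp_def)
  then obtain z where "(z,y) \<in> adj H" using a(2) by (auto elim: rtranclE)
  then show ?thesis by (auto simp: adj_def)
qed

lemma comp_sub: "gcomp H v \<subseteq> insert v (\<Union>H)"
  using comp_nonself by fastforce

lemma comp_finite: "finite H \<Longrightarrow> twosets H \<Longrightarrow> finite (gcomp H v)"
  by (rule finite_subset[OF comp_sub]) (auto simp: twosets_def)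

lemma comp_remove:
  assumes "H' \<subseteq> H" "\<forall>f\<in>H-H'. f \<inter> gcomp H' w = {} \<or> f \<subseteq> gcomp H' w"
  shows "gcomp H w = gcomp H' w"
proof
  have "adj H' \<subseteq> adj H" using assms(1) unfolding adj_def by blast
  then have "(adj H')\<^sup>* \<subseteq> (adj H)\<^sup>*" by (rule rtrancl_mono)
  then show "gcomp H' w \<subseteq> gcomp H w" unfolding gcomp_def by blast
next
  show "gcomp H w \<subseteq> gcomp H' w"
  proof
    fix x assume "x \<in> gcomp H w"
    then have "(w,x) \<in> (adj H)\<^sup>*" by (simp add: gcomp_def)
    then show "x \<in> gcomp H' w"
    proof (induction rule: rtrancl_induct)
      case base then show ?case by (simp add: comp_self)
    next
      case (step y z)
      then have yz: "{y,z} \<in> H" by (simp add: adj_def)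
      have ne: "{y,z} \<inter> gcomp H' w \<noteq> {}" using step.IH by blast
      show ?case
      proof (cases "{y,z} \<in> H'")
        case True
        then show ?thesis using comp_step[OF step.IH] by blast
      next
        case False
        with yz have "{y,z} \<in> H - H'" by simp
        from bspec[OF assms(2) this] ne have "{y,z} \<subseteq> gcomp H' w" by blast
        then show ?thesis by simp
      qed
    qed
  qed
qed

lemma degree_pos: "finite H \<Longrightarrow> f \<in> H \<Longrightarrow> y \<in> f \<Longrightarrow> degree H y \<ge> 1"
  unfolding degree_def
  by (metis (mono_tags, lifting) One_nat_def Suc_leI card_gt_0_iff empty_iff finite_subset mem_Collect_eq subsetI)

lemma degree_edge: "degree H y \<ge> 1 \<Longrightarrow> \<exists>f\<in>H. y \<in> f"
proof (rule ccontr)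
  assume a: "degree H y \<ge> 1" "\<not> (\<exists>f\<in>H. y \<in> f)"
  then have "{f\<in>H. y \<in> f} = {}" by auto
  then have "degree H y = 0" unfolding degree_def by (simp only: card.empty)
  then show False using a(1) by simp
qed

lemma degree_zero: "finite H \<Longrightarrow> degree H y = 0 \<Longrightarrow> f \<in> H \<Longrightarrow> y \<notin> f"
  using degree_pos by fastforce

lemma degree_one: "degree H y = 1 \<Longrightarrow> f \<in> H \<Longrightarrow> g \<in> H \<Longrightarrow> y \<in> f \<Longrightarrow> y \<in> g \<Longrightarrow> f = g"
  unfolding degree_def by (metis (mono_tags, lifting) card_1_singletonE mem_Collect_eq singletonD)

lemma degree_remove_out: "y \<notin> e \<Longrightarrow> degree (H - {e}) y = degree H y"
  unfolding degree_def by (rule arg_cong[where f=card]) auto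

lemma degree_remove_in: "finite H \<Longrightarrow> e \<in> H \<Longrightarrow> y \<in> e \<Longrightarrow> degree (H - {e}) y = degree H y - 1"
proof -
  assume a: "finite H" "e \<in> H" "y \<in> e"
  have "{f \<in> H - {e}. y \<in> f} = {f\<in>H. y \<in> f} - {e}" by auto
  then show ?thesis unfolding degree_def using a by (simp add: card_Diff_singleton)
qed

lemma degree_two_edges:
  assumes "degree H y = 2"
  obtains f g where "f \<in> H" "g \<in> H" "y \<in> f" "y \<in> g" "f \<noteq> g"
  using assms unfolding degree_def card_2_iff by blast

lemma two_le_degree: "finite H \<Longrightarrow> f \<in> H \<Longrightarrow> g \<in> H \<Longrightarrow> y \<in> f \<Longrightarrow> y \<in> g \<Longrightarrow> f \<noteq> g \<Longrightarrow> degree H y \<ge> 2"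
proof -
  assume a: "finite H" "f \<in> H" "g \<in> H" "y \<in> f" "y \<in> g" "f \<noteq> g"
  have "{f,g} \<subseteq> {h\<in>H. y \<in> h}" using a by auto
  moreover have "finite {h\<in>H. y \<in> h}" using a by simp
  ultimately have "card {f,g} \<le> degree H y" unfolding degree_def by (rule card_mono[rotated])
  then show ?thesis using a by simp
qed

definition coloring :: "'a set set \<Rightarrow> 'a set set \<Rightarrow> 'a set set \<Rightarrow> bool" where
  "coloring H P1 P2 \<longleftrightarrow> P1 \<union> P2 = H \<and> P1 \<inter> P2 = {} \<and> matching P1 \<and> matching P2"

lemma coloring_sym: "coloring H P1 P2 \<Longrightarrow> coloring H P2 P1"
  unfolding coloring_def by blast

lemma cov_deg2:
  assumes "coloring H P1 P2" "degree H y = 2"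
  shows "y \<in> \<Union>P1"
proof -
  obtain f g where fg: "f \<in> H" "g \<in> H" "y \<in> f" "y \<in> g" "f \<noteq> g"
    using degree_two_edges[OF assms(2)] by blast
  show ?thesis
  proof (rule ccontr)
    assume "y \<notin> \<Union>P1"
    then have "f \<in> P2" "g \<in> P2" using fg assms(1) unfolding coloring_def by auto
    then show False using fg assms(1) unfolding coloring_def matching_def by blast
  qed
qed

lemma cov_deg1:
  assumes "coloring H P1 P2" "degree H y = 1" "y \<in> \<Union>P1"
  shows "y \<notin> \<Union>P2"
proof
  assume "y \<in> \<Union>P2"
  then obtain g where "g \<in> P2" "y \<in> g" by blast
  moreover obtain f where "f \<in> P1" "y \<in> f" using assms(3) by blast
  ultimately show False using assms degree_one[OF assms(2), of f g] unfolding coloring_def by blast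
qed

lemma matching_card:
  assumes "matching P" "twosets P" "finite P"
  shows "card (\<Union>P) = 2 * card P"
proof -
  have "card (\<Union>P) = sum card P"
    apply (rule card_Union_disjoint)
    using assms unfolding pairwise_def disjnt_def matching_def twosets_def by auto
  also have "\<dots> = sum (\<lambda>_. 2) P"
    apply (rule sum.cong) using assms unfolding twosets_def by auto
  finally show ?thesis by simp
qed

lemma even_cov:
  assumes "matching P" "twosets P" "finite P"
    and closed: "\<forall>f\<in>P. f \<inter> K \<noteq> {} \<longrightarrow> f \<subseteq> K"
  shows "even (card (K \<inter> \<Union>P))"
proof -
  let ?Q = "{f\<in>P. f \<subseteq> K}"
  have "K \<inter> \<Union>P = \<Union>?Q" using closed by blast
  moreover have "card (\<Union>?Q) = 2 * card ?Q"
    apply (rule matching_card) using assms unfolding matching_def twosets_def by auto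
  ultimately show ?thesis by simp
qed


lemma degree_mono: "finite H \<Longrightarrow> H' \<subseteq> H \<Longrightarrow> degree H' y \<le> degree H y"
  unfolding degree_def by (rule card_mono) auto

lemma matching_insert:
  assumes "matching P" "\<forall>h\<in>P. e \<inter> h = {}"
  shows "matching (insert e P)"
  unfolding matching_def
proof (intro ballI impI)
  fix f g assume fg: "f \<in> insert e P" "g \<in> insert e P" "f \<noteq> g"
  show "f \<inter> g = {}"
  proof (cases "f = e")
    case True then show ?thesis using fg assms(2) by auto
  next
    case False
    show ?thesis
    proof (cases "g = e")
      case True then show ?thesis using fg assms(2) False by auto
    next
      case False2: False
      then show ?thesis using fg False assms(1) unfolding matching_def by auto
    qed
  qed
qed

lemma twosets_other: "twosets H \<Longrightarrow> e \<in> H \<Longrightarrow> u \<in> e \<Longrightarrow> \<exists>v. e = {u,v} \<and> u \<noteq> v"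
proof -
  assume a: "twosets H" "e \<in> H" "u \<in> e"
  then obtain a b where ab: "e = {a,b}" "a \<noteq> b" unfolding twosets_def by blast
  show ?thesis
  proof (cases "u = a")
    case True then show ?thesis using ab by blast
  next
    case False then have "u = b" using a(3) ab by blast
    then show ?thesis using ab by (metis insert_commute)
  qed
qed

lemma twosets_sub: "twosets H \<Longrightarrow> H' \<subseteq> H \<Longrightarrow> twosets H'"
  unfolding twosets_def by blast

lemma matching_sub: "matching H \<Longrightarrow> H' \<subseteq> H \<Longrightarrow> matching H'"
  unfolding matching_def by blast

lemma hyp_remove:
  assumes fin: "finite H" and deg: "\<forall>y. degree H y \<le> 2" and hyp: "Hyp H"
    and e: "e \<in> H" "e = {u,v}"
  shows "Hyp (H - {e})"
  unfolding Hyp_def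
proof (intro allI impI)
  fix w
  let ?H' = "H - {e}"
  assume a: "\<forall>y\<in>gcomp ?H' w. degree ?H' y = 2"
  have du: "degree ?H' u \<le> 1" using degree_remove_in[OF fin e(1), of u] e deg[rule_format, of u] by simp
  have dv: "degree ?H' v \<le> 1" using degree_remove_in[OF fin e(1), of v] e deg[rule_format, of v] by simp
  have nu: "u \<notin> gcomp ?H' w" using a du by fastforce
  have nv: "v \<notin> gcomp ?H' w" using a dv by fastforce
  have dj: "e \<inter> gcomp ?H' w = {}" using nu nv e by blast
  have eq: "gcomp H w = gcomp ?H' w"
    by (rule comp_remove) (use dj in blast)+
  have "\<forall>y\<in>gcomp H w. degree H y = 2"
  proof
    fix y assume "y \<in> gcomp H w"
    then have "y \<in> gcomp ?H' w" "y \<notin> e" using eq nu nv e by auto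
    then show "degree H y = 2" using a degree_remove_out[of y e H] by simp
  qed
  then have "even (card (gcomp H w))" using hyp unfolding Hyp_def by blast
  then show "even (card (gcomp ?H' w))" using eq by simp
qed

lemma case2_contra:
  assumes fin: "finite H" and ts: "twosets H" and deg: "\<forall>y. degree H y \<le> 2" and hyp: "Hyp H"
    and no1: "\<forall>y. degree H y \<noteq> 1"
    and e: "e \<in> H" "e = {u,v}" "u \<noteq> v"
    and col: "coloring (H - {e}) Pa Pb"
    and u: "u \<in> \<Union>Pa" and v: "v \<in> \<Union>Pb"
  shows False
proof -
  let ?H' = "H - {e}"
  let ?K = "gcomp ?H' u"
  have finH': "finite ?H'" using fin by simp
  have tsH': "twosets ?H'" using ts by (rule twosets_sub) auto
  have degH2: "degree H y = 2" if "y \<in> e" for y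
  proof -
    have "degree H y \<ge> 1" using degree_pos[OF fin e(1) that] .
    moreover have "degree H y \<le> 2" "degree H y \<noteq> 1" using deg no1 by auto
    ultimately show ?thesis by linarith
  qed
  have du: "degree ?H' u = 1" using degree_remove_in[OF fin e(1), of u] degH2[of u] e by simp
  have dv: "degree ?H' v = 1" using degree_remove_in[OF fin e(1), of v] degH2[of v] e by simp
  have deg2K: "degree ?H' y = 2" if yy: "y \<in> ?K" "y \<noteq> u" "y \<noteq> v" for y
  proof -
    obtain f where "f \<in> ?H'" "y \<in> f" using comp_nonself[OF yy(1) yy(2)] by blast
    then have "degree ?H' y \<ge> 1" using degree_pos[OF finH'] by blast
    moreover have "degree ?H' y = degree H y" using degree_remove_out[of y e H] yy e by simp
    moreover have "degree H y \<le> 2" "degree H y \<noteq> 1" using deg no1 by auto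
    ultimately show ?thesis by linarith
  qed
  have PaH: "Pa \<subseteq> ?H'" and PbH: "Pb \<subseteq> ?H'" using col unfolding coloring_def by auto
  have closedK: "\<forall>f\<in>?H'. f \<inter> ?K \<noteq> {} \<longrightarrow> f \<subseteq> ?K" using comp_edge[OF tsH'] by blast
  have nv: "v \<notin> \<Union>Pa" using cov_deg1[OF coloring_sym[OF col] dv v] .
  have nu: "u \<notin> \<Union>Pb" using cov_deg1[OF col du u] .
  have Ka: "?K \<inter> \<Union>Pa = ?K - {v}"
  proof
    show "?K \<inter> \<Union>Pa \<subseteq> ?K - {v}" using nv by blast
    show "?K - {v} \<subseteq> ?K \<inter> \<Union>Pa"
    proof
      fix y assume y: "y \<in> ?K - {v}"
      show "y \<in> ?K \<inter> \<Union>Pa"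
      proof (cases "y = u")
        case True then show ?thesis using u y by blast
      next
        case False
        then have "degree ?H' y = 2" using y by (intro deg2K) auto
        then show ?thesis using cov_deg2[OF col] y by blast
      qed
    qed
  qed
  have Kb: "?K \<inter> \<Union>Pb = ?K - {u}"
  proof
    show "?K \<inter> \<Union>Pb \<subseteq> ?K - {u}" using nu by blast
    show "?K - {u} \<subseteq> ?K \<inter> \<Union>Pb"
    proof
      fix y assume y: "y \<in> ?K - {u}"
      show "y \<in> ?K \<inter> \<Union>Pb"
      proof (cases "y = v")
        case True then show ?thesis using v y by blast
      next
        case False
        then have "degree ?H' y = 2" using y by (intro deg2K) auto
        then show ?thesis using cov_deg2[OF coloring_sym[OF col]] y by blast
      qed
    qed
  qed
  have mP: "matching Pa" "matching Pb" using col unfolding coloring_def by auto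
  have clA: "\<forall>f\<in>Pa. f \<inter> ?K \<noteq> {} \<longrightarrow> f \<subseteq> ?K" using closedK PaH by blast
  have clB: "\<forall>f\<in>Pb. f \<inter> ?K \<noteq> {} \<longrightarrow> f \<subseteq> ?K" using closedK PbH by blast
  have ea: "even (card (?K \<inter> \<Union>Pa))"
    using even_cov[OF mP(1) twosets_sub[OF tsH' PaH] finite_subset[OF PaH finH'] clA] .
  have eb: "even (card (?K \<inter> \<Union>Pb))"
    using even_cov[OF mP(2) twosets_sub[OF tsH' PbH] finite_subset[OF PbH finH'] clB] .
  have finK: "finite ?K" using comp_finite[OF finH' tsH'] .
  have uK: "u \<in> ?K" by (rule comp_self)
  have c1: "even (card ?K - 1)" using eb Kb finK uK by simp
  have cpos: "card ?K > 0" using finK uK card_gt_0_iff by blast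
  show False
  proof (cases "v \<in> ?K")
    case False
    then have "even (card ?K)" using ea Ka by simp
    then show False using c1 cpos by presburger
  next
    case True
    have eK: "e \<subseteq> ?K" using True uK e by blast
    have eq: "gcomp H u = ?K"
      by (rule comp_remove) (use eK in blast)+
    have "\<forall>y\<in>gcomp H u. degree H y = 2"
    proof
      fix y assume "y \<in> gcomp H u"
      then have y: "y \<in> ?K" using eq by simp
      show "degree H y = 2"
      proof (cases "y \<in> e")
        case True then show ?thesis using degH2 by blast
      next
        case False then show ?thesis using deg2K[OF y] degree_remove_out[of y e H] e by auto
      qed
    qed
    then have "even (card (gcomp H u))" using hyp unfolding Hyp_def by blast
    then have "even (card ?K)" using eq by simp
    then show False using c1 cpos by presburger
  qed
qed


lemma color_lemma:
  assumes "finite H" "twosets H" "\<forall>y. degree H y \<le> 2" "Hyp H"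
  shows "\<exists>P1 P2. coloring H P1 P2"
  using assms(1) assms(2-4)
proof (induction H rule: finite_psubset_induct)
  case (psubset H)
  note fin = psubset.hyps(1) and ts = psubset.prems(1) and deg = psubset.prems(2) and hyp = psubset.prems(3)
  show ?case
  proof (cases "H = {}")
    case True
    then show ?thesis unfolding coloring_def matching_def by auto
  next
    case nonempty: False
    have IH: "\<exists>P1 P2. coloring (H - {e}) P1 P2" if e: "e \<in> H" "e = {u,v}" for e u v
    proof -
      have ps: "H - {e} \<subset> H" using e(1) by blast
      have "\<forall>y. degree (H - {e}) y \<le> 2"
        using deg degree_mono[OF fin, of "H - {e}"] by (meson Diff_subset le_trans)
      moreover have "Hyp (H - {e})" using hyp_remove[OF fin deg hyp e] .
      moreover have "twosets (H - {e})" using twosets_sub[OF ts] by blast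
      ultimately show ?thesis using psubset.IH[OF ps] by blast
    qed
    show ?thesis
    proof (cases "\<exists>u. degree H u = 1")
      case True
      then obtain u where du: "degree H u = 1" by blast
      have "\<exists>f\<in>H. u \<in> f" using du degree_edge[of H u] by simp
      then obtain e where e: "e \<in> H" "u \<in> e" by blast
      then obtain v where ev: "e = {u,v}" "u \<noteq> v" using twosets_other[OF ts] by blast
      let ?H' = "H - {e}"
      obtain P1 P2 where col: "coloring ?H' P1 P2" using IH[OF e(1) ev(1)] by blast
      have du0: "degree ?H' u = 0" using degree_remove_in[OF fin e] du by simp
      have dv1: "degree ?H' v \<le> 1" using degree_remove_in[OF fin e(1), of v] ev deg[rule_format, of v] by simp
      have nu: "\<forall>f\<in>?H'. u \<notin> f" using degree_zero[OF _ du0] fin by blast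
      have eH': "e \<notin> ?H'" by simp
      have ext: "coloring H (insert e Pa) Pb"
        if c: "coloring ?H' Pa Pb" and nv: "v \<notin> \<Union>Pa" for Pa Pb
      proof -
        have PaH: "Pa \<subseteq> ?H'" using c unfolding coloring_def by auto
        have disj: "\<forall>h\<in>Pa. e \<inter> h = {}"
            using nu PaH nv ev by auto
        have "matching (insert e Pa)"
          by (rule matching_insert) (use c disj in \<open>auto simp: coloring_def\<close>)
        moreover have "insert e Pa \<union> Pb = H" using c e(1) unfolding coloring_def by blast
        moreover have "insert e Pa \<inter> Pb = {}" using c unfolding coloring_def by blast
        ultimately show ?thesis using c unfolding coloring_def by blast
      qed
      show ?thesis
      proof (cases "v \<in> \<Union>P1")
        case False
        then show ?thesis using ext[OF col] by blast
      next
        case True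
        have "v \<notin> \<Union>P2"
        proof
          assume "v \<in> \<Union>P2"
          then obtain g where g: "g \<in> P2" "v \<in> g" by blast
          obtain f where f: "f \<in> P1" "v \<in> f" using True by blast
          have "f \<noteq> g" using f g col unfolding coloring_def by blast
          moreover have "f \<in> ?H'" "g \<in> ?H'" using f g col unfolding coloring_def by auto
          ultimately have "degree ?H' v \<ge> 2" using two_le_degree[of ?H' f g v] fin f g by auto
          then show False using dv1 by simp
        qed
        then have "coloring H (insert e P2) P1" using ext[OF coloring_sym[OF col]] by blast
        then show ?thesis using coloring_sym by blast
      qed
    next
      case False
      then have no1: "\<forall>y. degree H y \<noteq> 1" by blast
      obtain e where e: "e \<in> H" using nonempty by blast
      then obtain u v where ev: "e = {u,v}" "u \<noteq> v" using ts unfolding twosets_def by blast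
      let ?H' = "H - {e}"
      obtain P1 P2 where col: "coloring ?H' P1 P2" using IH[OF e ev(1)] by blast
      have degH2: "degree H y = 2" if "y \<in> e" for y
      proof -
        have "degree H y \<ge> 1" using degree_pos[OF fin e that] .
        moreover have "degree H y \<le> 2" "degree H y \<noteq> 1" using deg no1 by auto
        ultimately show ?thesis by linarith
      qed
      have du: "degree ?H' u = 1" using degree_remove_in[OF fin e, of u] degH2[of u] ev by simp
      have dv: "degree ?H' v = 1" using degree_remove_in[OF fin e, of v] degH2[of v] ev by simp
      have cov: "y \<in> \<Union>P1 \<or> y \<in> \<Union>P2" if d1: "degree ?H' y = 1" for y
      proof -
        have "\<exists>f\<in>?H'. y \<in> f" using d1 degree_edge[of ?H' y] by simp
        then obtain f where "f \<in> ?H'" "y \<in> f" by blast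
        then show ?thesis using col unfolding coloring_def by blast
      qed
      have ext: "coloring H (insert e Pa) Pb"
        if c: "coloring ?H' Pa Pb" and nu: "u \<notin> \<Union>Pa" and nv: "v \<notin> \<Union>Pa" for Pa Pb
      proof -
        have PaH: "Pa \<subseteq> ?H'" using c unfolding coloring_def by auto
        have disj: "\<forall>h\<in>Pa. e \<inter> h = {}"
            using nu nv ev by auto
        have "matching (insert e Pa)"
          by (rule matching_insert) (use c disj in \<open>auto simp: coloring_def\<close>)
        moreover have "insert e Pa \<union> Pb = H" using c e(1) unfolding coloring_def by blast
        moreover have "insert e Pa \<inter> Pb = {}" using c unfolding coloring_def by blast
        ultimately show ?thesis using c unfolding coloring_def by blast
      qed
      have c1: "\<not> (u \<in> \<Union>P1 \<and> v \<in> \<Union>P2)"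
        using case2_contra[OF fin ts deg hyp no1 e ev(1) ev(2) col] by blast
      have c2: "\<not> (u \<in> \<Union>P2 \<and> v \<in> \<Union>P1)"
        using case2_contra[OF fin ts deg hyp no1 e ev(1) ev(2) coloring_sym[OF col]] by blast
      have n1: "u \<in> \<Union>P1 \<Longrightarrow> u \<notin> \<Union>P2" using cov_deg1[OF col du] by blast
      have n2: "v \<in> \<Union>P1 \<Longrightarrow> v \<notin> \<Union>P2" using cov_deg1[OF col dv] by blast
      show ?thesis
      proof (cases "u \<in> \<Union>P1")
        case True
        then have "v \<in> \<Union>P1" "u \<notin> \<Union>P2" "v \<notin> \<Union>P2" using c1 cov[OF dv] n1 n2 by blast+
        then have "coloring H (insert e P2) P1" using ext[OF coloring_sym[OF col]] by blast
        then show ?thesis using coloring_sym by blast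
      next
        case False
        then have "v \<notin> \<Union>P1" using c2 cov[OF du] by blast
        then show ?thesis using ext[OF col False] by blast
      qed
    qed
  qed
qed



lemma handshake:
  assumes "finite V" "\<forall>e\<in>X. e \<subseteq> V" "twosets X"
  shows "sum (degree X) V = 2 * card X"
proof -
  have finX: "finite X" using assms(1,2) by (meson Pow_iff finite_Pow_iff finite_subset subsetI)
  have "sum (degree X) V = sum (\<lambda>v. sum (\<lambda>e. if v \<in> e then 1 else 0) X) V"
    unfolding degree_def by (rule sum.cong) (simp_all add: sum.inter_filter[OF finX, symmetric])
  also have "\<dots> = sum (\<lambda>e. sum (\<lambda>v. if v \<in> e then 1 else 0) V) X" by (rule sum.swap)
  also have "\<dots> = sum (\<lambda>e. card {v\<in>V. v \<in> e}) X"
    by (rule sum.cong) (simp_all add: sum.inter_filter[OF assms(1), symmetric])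
  also have "\<dots> = sum (\<lambda>e. 2) X"
  proof (rule sum.cong)
    fix e assume "e \<in> X"
    then have "{v\<in>V. v \<in> e} = e" "card e = 2" using assms(2,3) unfolding twosets_def by auto
    then show "card {v\<in>V. v \<in> e} = 2" by simp
  qed simp
  finally show ?thesis by simp
qed

lemma comp_V:
  assumes "\<forall>e\<in>F. e \<subseteq> V" "v \<in> V"
  shows "{u\<in>V. (v,u) \<in> (adj F)\<^sup>*} = gcomp F v" "gcomp F v \<subseteq> V"
proof -
  show "gcomp F v \<subseteq> V" using comp_sub[of F v] assms by blast
  then show "{u\<in>V. (v,u) \<in> (adj F)\<^sup>*} = gcomp F v" unfolding gcomp_def by blast
qed

lemma odd_end:
  assumes col: "coloring H Pa Pb" and fin: "finite H" and ts: "twosets H"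
    and cl: "\<forall>f\<in>H. f \<inter> C \<noteq> {} \<longrightarrow> f \<subseteq> C" and finC: "finite C" and oddC: "odd (card C)"
    and xy: "x \<in> C" "y \<in> C" "x \<noteq> y" "degree H x = 1" "degree H y = 1"
    and d2: "\<forall>z\<in>C-{x,y}. degree H z = 2"
    and cov: "x \<in> \<Union>Pa" "y \<in> \<Union>Pa"
  shows False
proof -
  have PbH: "Pb \<subseteq> H" using col unfolding coloring_def by auto
  have nx: "x \<notin> \<Union>Pb" using cov_deg1[OF col xy(4) cov(1)] .
  have ny: "y \<notin> \<Union>Pb" using cov_deg1[OF col xy(5) cov(2)] .
  have "C \<inter> \<Union>Pb = C - {x,y}"
  proof
    show "C \<inter> \<Union>Pb \<subseteq> C - {x,y}" using nx ny by blast
    show "C - {x,y} \<subseteq> C \<inter> \<Union>Pb"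
    proof
      fix z assume z: "z \<in> C - {x,y}"
      then have "degree H z = 2" using d2 by blast
      then show "z \<in> C \<inter> \<Union>Pb" using cov_deg2[OF coloring_sym[OF col]] z by blast
    qed
  qed
  moreover have "even (card (C \<inter> \<Union>Pb))"
    apply (rule even_cov)
    using col PbH cl twosets_sub[OF ts PbH] finite_subset[OF PbH fin] unfolding coloring_def by auto
  moreover have "card (C - {x,y}) = card C - 2" using xy finC by (simp add: card_Diff_subset)
  ultimately have "even (card C - 2)" by simp
  moreover have "card {x,y} \<le> card C" using xy finC by (intro card_mono) auto
  then have "card C \<ge> 2" using xy by simp
  ultimately show False using oddC by presburger
qed


lemma filter_insert: "{g \<in> insert x A. P g} = (if P x then insert x {g\<in>A. P g} else {g\<in>A. P g})"
  by auto

lemma hex: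
  assumes d: "distinct [a,b,c,d,e,f]"
    and F: "F = {{a,b},{b,c},{c,d},{d,e},{e,f},{f,a}}"
  shows "\<forall>v\<in>{a,b,c,d,e,f}. degree F v = 2"
    "\<forall>v\<in>{a,b,c,d,e,f}. \<forall>u\<in>{a,b,c,d,e,f}. (v,u) \<in> (adj F)\<^sup>*"
proof -
  show "\<forall>v\<in>{a,b,c,d,e,f}. degree F v = 2"
  proof -
    have nd: "a \<noteq> b" "a \<noteq> c" "a \<noteq> d" "a \<noteq> e" "a \<noteq> f" "b \<noteq> c" "b \<noteq> d" "b \<noteq> e"
      "b \<noteq> f" "c \<noteq> d" "c \<noteq> e" "c \<noteq> f" "d \<noteq> e" "d \<noteq> f" "e \<noteq> f" using d by auto
    note nd' = nd nd[symmetric]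
    show ?thesis unfolding degree_def F filter_insert by (simp add: nd' doubleton_eq_iff)
  qed
  let ?r = "adj F"
  have s1: "(a,b) \<in> ?r" "(b,c) \<in> ?r" "(c,d) \<in> ?r" "(d,e) \<in> ?r" "(e,f) \<in> ?r"
    unfolding adj_def F by simp_all
  have r1: "(a,b) \<in> ?r\<^sup>*" using s1 by blast
  have r2: "(a,c) \<in> ?r\<^sup>*" using r1 s1(2) by (rule rtrancl_into_rtrancl)
  have r3: "(a,d) \<in> ?r\<^sup>*" using r2 s1(3) by (rule rtrancl_into_rtrancl)
  have r4: "(a,e) \<in> ?r\<^sup>*" using r3 s1(4) by (rule rtrancl_into_rtrancl)
  have r5: "(a,f) \<in> ?r\<^sup>*" using r4 s1(5) by (rule rtrancl_into_rtrancl)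
  have fw: "\<forall>u\<in>{a,b,c,d,e,f}. (a,u) \<in> ?r\<^sup>*"
    using r1 r2 r3 r4 r5 by simp
  have bw: "\<forall>u\<in>{a,b,c,d,e,f}. (u,a) \<in> ?r\<^sup>*"
  proof
    fix u assume "u \<in> {a,b,c,d,e,f}"
    then have "(a,u) \<in> ?r\<^sup>*" using fw by blast
    then show "(u,a) \<in> ?r\<^sup>*" by (rule rtrancl_adj_sym)
  qed
  show "\<forall>v\<in>{a,b,c,d,e,f}. \<forall>u\<in>{a,b,c,d,e,f}. (v,u) \<in> (adj F)\<^sup>*"
  proof (intro ballI)
    fix v u assume "v \<in> {a,b,c,d,e,f}" "u \<in> {a,b,c,d,e,f}"
    then have "(v,a) \<in> ?r\<^sup>*" "(a,u) \<in> ?r\<^sup>*" using fw bw by blast+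
    then show "(v,u) \<in> ?r\<^sup>*" by (rule rtrancl_trans)
  qed
qed

lemma lower_bound:
  assumes "card E = 3 * n" "n \<ge> 1" "finite \<M>" "\<forall>M\<in>\<M>. k_matching E (n-1) M" "\<Union>\<M> = E"
  shows "card \<M> \<ge> 4"
proof (rule ccontr)
  assume "\<not> card \<M> \<ge> 4"
  then have c3: "card \<M> \<le> 3" by simp
  have "card E \<le> sum card \<M>" using assms(5) card_Union_le_sum_card by metis
  also have "sum card \<M> = sum (\<lambda>_. n - 1) \<M>"
    by (rule sum.cong) (use assms(4) in \<open>auto simp: k_matching_def\<close>)
  also have "\<dots> = card \<M> * (n - 1)" by simp
  also have "\<dots> \<le> 3 * (n - 1)" using c3 by (rule mult_le_mono1)
  finally show False using assms(1,2) by linarith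
qed

lemma edge_remove_card:
  assumes ts: "twosets M" and fin: "finite M" and dx: "degree M x = 1" and dy: "degree M y = 1"
    and xy: "x \<noteq> y" "{x,y} \<notin> M"
  shows "card {f\<in>M. f \<inter> {x,y} = {}} = card M - 2"
proof -
  have R: "{f\<in>M. f \<inter> {x,y} \<noteq> {}} = {f\<in>M. x \<in> f} \<union> {f\<in>M. y \<in> f}" by blast
  have disj: "{f\<in>M. x \<in> f} \<inter> {f\<in>M. y \<in> f} = {}"
  proof (rule ccontr)
    assume "{f\<in>M. x \<in> f} \<inter> {f\<in>M. y \<in> f} \<noteq> {}"
    then obtain f where f: "f \<in> M" "x \<in> f" "y \<in> f" by blast
    then obtain w where "f = {x,w}" "x \<noteq> w" using twosets_other[OF ts] by blast
    then have "f = {x,y}" using f xy by auto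
    then show False using f xy by simp
  qed
  have "card {f\<in>M. f \<inter> {x,y} \<noteq> {}} = 2"
    unfolding R using card_Un_disjoint[OF _ _ disj] fin dx dy unfolding degree_def by simp
  moreover have "{f\<in>M. f \<inter> {x,y} = {}} = M - {f\<in>M. f \<inter> {x,y} \<noteq> {}}" by blast
  ultimately show ?thesis using fin by (simp add: card_Diff_subset)
qed



lemma tri:
  assumes tsF: "twosets F" and deg: "\<forall>v\<in>C. degree F v = 2" and C: "C = gcomp F c" "card C = 3"
    and v: "v \<in> C" and w: "w \<in> C" "v \<noteq> w"
  shows "{v,w} \<in> F"
proof -
  have "degree F v = 2" using deg v by blast
  then obtain f g where fg: "f \<in> F" "g \<in> F" "v \<in> f" "v \<in> g" "f \<noteq> g"
    by (rule degree_two_edges)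
  obtain a where fa: "f = {v,a}" "v \<noteq> a" using twosets_other[OF tsF fg(1) fg(3)] by blast
  obtain b where gb: "g = {v,b}" "v \<noteq> b" using twosets_other[OF tsF fg(2) fg(4)] by blast
  have ab: "a \<noteq> b"
  proof
    assume "a = b" then show False using fa(1) gb(1) fg(5) by simp
  qed
  have vC: "v \<in> gcomp F c" using v C(1) by simp
  have "{v,a} \<in> F" using fg(1) fa(1) by simp
  from comp_step[OF vC this] have aC: "a \<in> C" using C(1) by simp
  have "{v,b} \<in> F" using fg(2) gb(1) by simp
  from comp_step[OF vC this] have bC: "b \<in> C" using C(1) by simp
  have sub: "{v,a,b} \<subseteq> C" using v aC bC by simp
  have "card {v,a,b} = 3" using fa gb ab by simp
  then have eq: "{v,a,b} = C"
    using card_subset_eq[OF _ sub] C(2) card.infinite[of C] by fastforce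
  then have "w = a \<or> w = b" using w by blast
  then show ?thesis using fg(1,2) fa(1) gb(1) by blast
qed

lemma prism:
  assumes finV: "finite V" and FE: "F \<subseteq> E" and tsF: "twosets F" and FV: "\<forall>e\<in>F. e \<subseteq> V"
    and degF: "\<forall>v\<in>V. degree F v = 2"
    and EV: "\<forall>e\<in>E. e \<subseteq> V" and tsE: "twosets E"
    and degM: "\<forall>v\<in>V. degree (E - F) v = 1"
    and C1: "C1 = gcomp F c1" "card C1 = 3" and C2: "C2 = gcomp F c2" "card C2 = 3"
    and disj: "C1 \<inter> C2 = {}" and cover: "C1 \<union> C2 = V"
  shows "\<exists>F'. two_factor V E F' \<and> odd_circuits V F' = 0"
proof -
  let ?M = "E - F"
  have tsM: "twosets ?M" using twosets_sub[OF tsE] by blast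
  have dC1: "\<forall>v\<in>C1. degree F v = 2" using degF cover by blast
  have dC2: "\<forall>v\<in>C2. degree F v = 2" using degF cover by blast
  obtain x y z where xyz: "C1 = {x,y,z}" "x \<noteq> y" "y \<noteq> z" "x \<noteq> z"
    using C1(2) unfolding card_3_iff by blast
  have partner: "\<exists>p. {v,p} \<in> ?M \<and> p \<in> C2" if v: "v \<in> C1" for v
  proof -
    have vV: "v \<in> V" using v cover by blast
    have "degree ?M v \<ge> 1" using degM vV by simp
    then have "\<exists>f\<in>?M. v \<in> f" by (rule degree_edge)
    then obtain f where f: "f \<in> ?M" "v \<in> f" by blast
    obtain p where fp: "f = {v,p}" "v \<noteq> p" using twosets_other[OF tsM f] by blast
    have pV: "p \<in> V" using f(1) fp(1) EV by blast
    have "p \<notin> C1"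
    proof
      assume "p \<in> C1"
      then have "{v,p} \<in> F" using tri[OF tsF dC1 C1 v _ fp(2)] by blast
      then show False using f(1) fp(1) by simp
    qed
    then have "p \<in> C2" using pV cover by blast
    then show ?thesis using f(1) fp(1) by blast
  qed
  obtain px where px: "{x,px} \<in> ?M" "px \<in> C2" using partner xyz(1) by blast
  obtain py where py: "{y,py} \<in> ?M" "py \<in> C2" using partner xyz(1) by blast
  obtain pz where pz: "{z,pz} \<in> ?M" "pz \<in> C2" using partner xyz(1) by blast
  have pdist: "p \<noteq> q" if "{u,p} \<in> ?M" "{w,q} \<in> ?M" "u \<noteq> w" "p \<in> V" for u w p q
  proof
    assume pq: "p = q"
    have "degree ?M p = 1" using degM that(4) by blast
    moreover have "{u,p} \<noteq> {w,q}" using that(3) pq by (metis doubleton_eq_iff)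
    ultimately show False using degree_one[of ?M p "{u,p}" "{w,q}"] that(1,2) pq by simp
  qed
  have pV: "px \<in> V" "py \<in> V" "pz \<in> V" using px py pz cover by auto
  have pxy: "px \<noteq> py" using pdist[OF px(1) py(1) xyz(2) pV(1)] .
  have pyz: "py \<noteq> pz" using pdist[OF py(1) pz(1) xyz(3) pV(2)] .
  have pxz: "px \<noteq> pz" using pdist[OF px(1) pz(1) xyz(4) pV(1)] .
  have C2eq: "C2 = {px,py,pz}"
  proof -
    have sub: "{px,py,pz} \<subseteq> C2" using px py pz by simp
    have "card {px,py,pz} = 3" using pxy pyz pxz by simp
    then show ?thesis using card_subset_eq[OF _ sub] C2(2) card.infinite[of C2] by fastforce
  qed
  have inC1: "x \<in> C1" "y \<in> C1" "z \<in> C1" using xyz(1) by auto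
  have f1: "{x,y} \<in> F" using tri[OF tsF dC1 C1 inC1(1) inC1(2) xyz(2)] .
  have f2: "{y,z} \<in> F" using tri[OF tsF dC1 C1 inC1(2) inC1(3) xyz(3)] .
  have f3: "{pz,py} \<in> F" using tri[OF tsF dC2 C2 pz(2) py(2)] pyz by simp
  have f4: "{py,px} \<in> F" using tri[OF tsF dC2 C2 py(2) px(2)] pxy by simp
  have m5: "{z,pz} \<in> E" using pz(1) by simp
  have m6: "{px,x} \<in> E" using px(1) by (simp add: insert_commute)
  define F' where "F' = {{x,y},{y,z},{z,pz},{pz,py},{py,px},{px,x}}"
  have dj: "x \<noteq> pz" "x \<noteq> py" "x \<noteq> px" "y \<noteq> pz" "y \<noteq> py" "y \<noteq> px" "z \<noteq> pz" "z \<noteq> py" "z \<noteq> px"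
    using inC1 px(2) py(2) pz(2) disj by blast+
  have dist: "distinct [x,y,z,pz,py,px]" using xyz pxy pyz pxz dj by auto
  note hx = hex[OF dist F'_def]
  have Veq: "V = {x,y,z,pz,py,px}" using cover xyz(1) C2eq by auto
  have tf: "two_factor V E F'"
  proof -
    have "F' \<subseteq> E" unfolding F'_def using f1 f2 f3 f4 m5 m6 FE by auto
    moreover have "\<forall>v\<in>V. degree F' v = 2" using hx(1) Veq by simp
    ultimately show ?thesis unfolding two_factor_def by blast
  qed
  have comps: "components V F' = {V}"
  proof -
    have "\<forall>v\<in>V. {u\<in>V. (v,u) \<in> (adj F')\<^sup>*} = V" using hx(2) Veq by blast
    then have "components V F' = (\<lambda>v. V) ` V" unfolding components_def by (intro image_cong) auto
    moreover have "V \<noteq> {}" using Veq by blast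
    ultimately show ?thesis by auto
  qed
  have "card V = 6" using Veq dist by simp
  then have "odd_circuits V F' = 0" unfolding odd_circuits_def comps by simp
  then show ?thesis using tf by blast
qed

lemma cover_exists:
  fixes V :: "'a set" and E :: "'a set set" and n :: nat
  assumes cub: "cubic_graph V E"
    and cV: "card V = 2 * n"
    and h2f: "has_two_factor V E"
    and odd2: "oddness V E = 2"
  shows "\<exists>P1 P2 A B. n \<ge> 3 \<and> k_matching E (n-1) P1 \<and> k_matching E (n-1) P2 \<and> k_matching E (n-1) A
          \<and> k_matching E (n-1) B \<and> P1 \<union> P2 \<union> A \<union> B = E"
proof -
  have sg: "simple_graph V E" and deg3: "\<forall>v\<in>V. degree E v = 3"
    using cub unfolding cubic_graph_def by auto
  have finV: "finite V" using sg unfolding simple_graph_def by auto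
  have sg2: "\<forall>e\<in>E. \<exists>u v. e = {u, v} \<and> u \<noteq> v \<and> u \<in> V \<and> v \<in> V"
    using sg unfolding simple_graph_def by auto
  have EV: "\<forall>e\<in>E. e \<subseteq> V"
  proof
    fix e assume "e \<in> E"
    then obtain u v where "e = {u, v}" "u \<in> V" "v \<in> V" using sg2 by blast
    then show "e \<subseteq> V" by simp
  qed
  have tsE: "twosets E" unfolding twosets_def
  proof
    fix e assume "e \<in> E"
    then obtain u v where "e = {u, v}" "u \<noteq> v" using sg2 by blast
    then show "\<exists>u v. e = {u, v} \<and> u \<noteq> v" by blast
  qed
  have finE: "finite E"
  proof -
    have "E \<subseteq> Pow V" using EV by blast
    then show ?thesis using finV by (meson finite_Pow_iff finite_subset)
  qed
  let ?S = "{odd_circuits V F |F. two_factor V E F}"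
  have Seq: "?S = odd_circuits V ` {F. two_factor V E F}" by blast
  have "{F. two_factor V E F} \<subseteq> Pow E" unfolding two_factor_def by blast
  then have "finite {F. two_factor V E F}" using finE by (meson finite_Pow_iff finite_subset)
  then have finS: "finite ?S" using Seq by simp
  have neS: "?S \<noteq> {}" using h2f unfolding has_two_factor_def by blast
  have "Min ?S \<in> ?S" using finS neS by (rule Min_in)
  then obtain F where tf: "two_factor V E F" and oc: "odd_circuits V F = 2"
    using odd2 unfolding oddness_def by auto
  have FE: "F \<subseteq> E" and degF: "\<forall>v\<in>V. degree F v = 2" using tf unfolding two_factor_def by auto
  have finF: "finite F" using finE FE by (rule finite_subset[rotated])
  have tsF: "twosets F" using twosets_sub[OF tsE FE] .
  have FV: "\<forall>e\<in>F. e \<subseteq> V" using FE EV by blast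
  have degF_le: "\<forall>y. degree F y \<le> 2"
  proof
    fix y show "degree F y \<le> 2"
    proof (cases "y \<in> V")
      case True then show ?thesis using degF by simp
    next
      case False
      have emp: "{e\<in>F. y \<in> e} = {}" using FV False by blast
      show ?thesis unfolding degree_def emp by simp
    qed
  qed
  let ?OC = "{C \<in> components V F. odd (card C)}"
  have "card ?OC = 2" using oc unfolding odd_circuits_def .
  then obtain C1 C2 where OC: "?OC = {C1, C2}" "C1 \<noteq> C2" unfolding card_2_iff by blast
  have compF: "{u\<in>V. (v,u) \<in> (adj F)\<^sup>*} = gcomp F v" "gcomp F v \<subseteq> V" if "v \<in> V" for v
    using comp_V[OF FV that] by auto
  have "C1 \<in> components V F" using OC by blast
  then obtain c1 where c1: "c1 \<in> V" "C1 = gcomp F c1" unfolding components_def using compF by auto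
  have "C2 \<in> components V F" using OC by blast
  then obtain c2 where c2: "c2 \<in> V" "C2 = gcomp F c2" unfolding components_def using compF by auto
  have oddC: "odd (card C1)" "odd (card C2)" using OC by blast+
  have onlyC: "gcomp F w = C1 \<or> gcomp F w = C2" if "w \<in> V" "odd (card (gcomp F w))" for w
  proof -
    have "gcomp F w \<in> components V F" unfolding components_def using compF[OF that(1)] that(1) by blast
    then have "gcomp F w \<in> ?OC" using that by blast
    then show ?thesis using OC by blast
  qed
  have C1V: "C1 \<subseteq> V" using compF(2)[OF c1(1)] c1(2) by simp
  have C2V: "C2 \<subseteq> V" using compF(2)[OF c2(1)] c2(2) by simp
  have finC: "finite C1" "finite C2" using finite_subset[OF C1V finV] finite_subset[OF C2V finV] by auto
  have disjC: "C1 \<inter> C2 = {}"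
  proof (rule ccontr)
    assume "C1 \<inter> C2 \<noteq> {}"
    then obtain z where "z \<in> C1" "z \<in> C2" by blast
    then have "gcomp F z = C1" "gcomp F z = C2" using comp_eq[of z F c1] comp_eq[of z F c2] c1 c2 by simp_all
    then show False using OC by simp
  qed
  have edge_at: "\<exists>y. {c,y} \<in> F \<and> c \<noteq> y" if "c \<in> V" for c
  proof -
    have "degree F c \<ge> 1" using degF that by simp
    then have "\<exists>f\<in>F. c \<in> f" by (rule degree_edge)
    then obtain f where f: "f \<in> F" "c \<in> f" by blast
    obtain y where "f = {c,y}" "c \<noteq> y" using twosets_other[OF tsF f] by blast
    then show ?thesis using f(1) by blast
  qed
  obtain y1 where e1: "{c1,y1} \<in> F" "c1 \<noteq> y1" using edge_at[OF c1(1)] by blast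
  obtain y2 where e2: "{c2,y2} \<in> F" "c2 \<noteq> y2" using edge_at[OF c2(1)] by blast
  define e1' where "e1' = {c1,y1}"
  define e2' where "e2' = {c2,y2}"
  have e1C: "e1' \<subseteq> C1" unfolding e1'_def c1(2) using comp_edge[OF tsF e1(1) insertI1 comp_self] .
  have e2C: "e2' \<subseteq> C2" unfolding e2'_def c2(2) using comp_edge[OF tsF e2(1) insertI1 comp_self] .
  have e12: "e1' \<inter> e2' = {}" using e1C e2C disjC by blast
  define H where "H = (F - {e1'}) - {e2'}"
  have HF: "H \<subseteq> F" unfolding H_def by blast
  have finH: "finite H" using finF HF finite_subset by blast
  have tsH: "twosets H" using twosets_sub[OF tsF HF] .
  have degH_out: "degree H y = degree F y" if "y \<notin> e1'" "y \<notin> e2'" for y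
    unfolding H_def using degree_remove_out[of y e2' "F - {e1'}"] degree_remove_out[of y e1' F] that by simp
  have e1F: "e1' \<in> F" "e2' \<in> F" using e1 e2 unfolding e1'_def e2'_def by auto
  have degH_in1: "degree H y = 1" if "y \<in> e1'" for y
  proof -
    have "y \<notin> e2'" using that e12 by blast
    then have "degree H y = degree (F - {e1'}) y" unfolding H_def by (rule degree_remove_out)
    also have "\<dots> = degree F y - 1" using degree_remove_in[OF finF e1F(1) that] .
    also have "\<dots> = 1"
    proof -
      have "y \<in> V" using that FV e1F by blast
      then show ?thesis using degF by simp
    qed
    finally show ?thesis .
  qed
  have degH_in2: "degree H y = 1" if "y \<in> e2'" for y
  proof -
    have "y \<notin> e1'" using that e12 by blast
    have "e2' \<in> F - {e1'}" using e1F e12 e2(2) unfolding e2'_def by auto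
    then have "degree H y = degree (F - {e1'}) y - 1" unfolding H_def
      using degree_remove_in[of "F - {e1'}" e2' y] finF that by simp
    also have "\<dots> = degree F y - 1" using degree_remove_out[OF \<open>y \<notin> e1'\<close>] by simp
    also have "\<dots> = 1"
    proof -
      have "y \<in> V" using that FV e1F by blast
      then show ?thesis using degF by simp
    qed
    finally show ?thesis .
  qed
  have degH_le: "\<forall>y. degree H y \<le> 2"
  proof
    fix y show "degree H y \<le> 2" using degF_le[rule_format, of y] degree_mono[OF finF HF, of y] by linarith
  qed
  have hypH: "Hyp H"
    unfolding Hyp_def
  proof (intro allI impI)
    fix w assume a: "\<forall>y\<in>gcomp H w. degree H y = 2"
    let ?K = "gcomp H w"
    have n1: "e1' \<inter> ?K = {}"
    proof (rule ccontr)
      assume "e1' \<inter> ?K \<noteq> {}"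
      then obtain y where y: "y \<in> e1'" "y \<in> ?K" by blast
      then have "degree H y = 2" using a by blast
      then show False using degH_in1[OF y(1)] by simp
    qed
    have n2: "e2' \<inter> ?K = {}"
    proof (rule ccontr)
      assume "e2' \<inter> ?K \<noteq> {}"
      then obtain y where y: "y \<in> e2'" "y \<in> ?K" by blast
      then have "degree H y = 2" using a by blast
      then show False using degH_in2[OF y(1)] by simp
    qed
    have eq: "gcomp F w = ?K"
    proof (rule comp_remove[OF HF])
      have sub: "F - H \<subseteq> {e1', e2'}" unfolding H_def by blast
      show "\<forall>f\<in>F - H. f \<inter> ?K = {} \<or> f \<subseteq> ?K"
      proof
        fix f assume "f \<in> F - H"
        then have "f = e1' \<or> f = e2'" using sub by blast
        then show "f \<inter> ?K = {} \<or> f \<subseteq> ?K" using n1 n2 by blast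
      qed
    qed
    have "degree H w = 2" using bspec[OF a comp_self] .
    then have "\<exists>f\<in>H. w \<in> f" using degree_edge[of H w] by simp
    then obtain f where "f \<in> H" "w \<in> f" by blast
    then have wV: "w \<in> V" using HF FV by blast
    show "even (card ?K)"
    proof (rule ccontr)
      assume "odd (card ?K)"
      then have "gcomp F w = C1 \<or> gcomp F w = C2" using onlyC[OF wV] eq by simp
      moreover have "c1 \<notin> ?K" "c2 \<notin> ?K" using n1 n2 unfolding e1'_def e2'_def by blast+
      moreover have "c1 \<in> C1" "c2 \<in> C2" using c1(2) c2(2) comp_self by simp_all
      ultimately show False using eq by metis
    qed
  qed
  obtain P1 P2 where col: "coloring H P1 P2" using color_lemma[OF finH tsH degH_le hypH] by blast
  have PH: "P1 \<subseteq> H" "P2 \<subseteq> H" "P1 \<union> P2 = H" "P1 \<inter> P2 = {}" "matching P1" "matching P2"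
    using col unfolding coloring_def by auto
  have sumF: "sum (degree F) V = sum (\<lambda>_. 2) V" using degF by (intro sum.cong) auto
  have cF: "card F = 2 * n" using handshake[OF finV FV tsF] sumF cV by simp
  have c1e1: "c1 \<in> e1'" unfolding e1'_def by simp
  have e1ne: "e1' \<noteq> e2'" using e12 c1e1 by blast
  have e2F1: "e2' \<in> F - {e1'}" using e1F e1ne by blast
  have cH: "card H = 2 * n - 2"
  proof -
    have "card (F - {e1'}) = 2 * n - 1" using card_Diff_singleton[OF e1F(1)] cF by simp
    then show ?thesis unfolding H_def using card_Diff_singleton[OF e2F1] by simp
  qed
  have finP: "finite P1" "finite P2" using finite_subset[OF PH(1) finH] finite_subset[OF PH(2) finH] by auto
  have cP: "card P1 + card P2 = 2 * n - 2"
    using card_Un_disjoint[OF finP PH(4)] PH(3) cH by simp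
  have cl: "\<forall>f\<in>H. f \<inter> C \<noteq> {} \<longrightarrow> f \<subseteq> C" if C: "C = gcomp F c" for C c
  proof (intro ballI impI)
    fix f assume f: "f \<in> H" "f \<inter> C \<noteq> {}"
    then obtain x where x: "x \<in> f" "x \<in> C" by blast
    have "f \<in> F" using f(1) HF by blast
    from comp_edge[OF tsF this x(1)] x(2) C show "f \<subseteq> C" by simp
  qed
  have y1C: "y1 \<in> C1" using e1C unfolding e1'_def by simp
  have y2C: "y2 \<in> C2" using e2C unfolding e2'_def by simp
  have c1C: "c1 \<in> C1" using c1(2) comp_self by simp
  have c2C: "c2 \<in> C2" using c2(2) comp_self by simp
  have d2C1: "\<forall>z\<in>C1-{c1,y1}. degree H z = 2"
  proof
    fix z assume z: "z \<in> C1-{c1,y1}"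
    then have "z \<notin> e1'" unfolding e1'_def by simp
    moreover have "z \<notin> e2'" using z e2C disjC by blast
    moreover have "z \<in> V" using z C1V by blast
    ultimately show "degree H z = 2" using degH_out degF by simp
  qed
  have d2C2: "\<forall>z\<in>C2-{c2,y2}. degree H z = 2"
  proof
    fix z assume z: "z \<in> C2-{c2,y2}"
    then have "z \<notin> e2'" unfolding e2'_def by simp
    moreover have "z \<notin> e1'" using z e1C disjC by blast
    moreover have "z \<in> V" using z C2V by blast
    ultimately show "degree H z = 2" using degH_out degF by simp
  qed
  have dH1: "degree H c1 = 1" "degree H y1 = 1" using degH_in1 unfolding e1'_def by auto
  have dH2: "degree H c2 = 1" "degree H y2 = 1" using degH_in2 unfolding e2'_def by auto
  have bound: "card Pa \<le> n - 1" if colA: "coloring H Pa Pb" for Pa Pb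
  proof -
    have "\<not> (c1 \<in> \<Union>Pa \<and> y1 \<in> \<Union>Pa)"
      using odd_end[OF colA finH tsH cl[OF c1(2)] finC(1) oddC(1) c1C y1C e1(2) dH1 d2C1] by blast
    then obtain a1 where a1: "a1 \<in> C1" "a1 \<notin> \<Union>Pa" using c1C y1C by blast
    have "\<not> (c2 \<in> \<Union>Pa \<and> y2 \<in> \<Union>Pa)"
      using odd_end[OF colA finH tsH cl[OF c2(2)] finC(2) oddC(2) c2C y2C e2(2) dH2 d2C2] by blast
    then obtain a2 where a2: "a2 \<in> C2" "a2 \<notin> \<Union>Pa" using c2C y2C by blast
    have a12: "a1 \<noteq> a2" using a1 a2 disjC by blast
    have PaH: "Pa \<subseteq> H" using colA unfolding coloring_def by auto
    have "\<Union>Pa \<subseteq> V" using PaH HF FV by blast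
    then have sub: "\<Union>Pa \<subseteq> V - {a1,a2}" using a1 a2 by blast
    have aV: "{a1,a2} \<subseteq> V" using a1(1) a2(1) C1V C2V by blast
    have "card (V - {a1,a2}) = card V - card {a1,a2}" using card_Diff_subset[OF _ aV] by simp
    then have "card (V - {a1,a2}) = 2 * n - 2" using a12 cV by simp
    then have "card (\<Union>Pa) \<le> 2 * n - 2" using card_mono[OF _ sub] finV by simp
    moreover have "card (\<Union>Pa) = 2 * card Pa"
      using matching_card[of Pa] colA twosets_sub[OF tsH PaH] finite_subset[OF PaH finH]
      unfolding coloring_def by simp
    ultimately show ?thesis by simp
  qed
  have cP1: "card P1 = n - 1" and cP2: "card P2 = n - 1"
    using bound[OF col] bound[OF coloring_sym[OF col]] cP by auto
  define M where "M = E - F"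
  have ME: "M \<subseteq> E" unfolding M_def by blast
  have finM: "finite M" using finite_subset[OF ME finE] .
  have tsM: "twosets M" using twosets_sub[OF tsE ME] .
  have MF: "M \<inter> F = {}" unfolding M_def by blast
  have degM: "degree M v = 1" if v: "v \<in> V" for v
  proof -
    have un: "{e\<in>E. v \<in> e} = {e\<in>F. v \<in> e} \<union> {e\<in>M. v \<in> e}" using FE unfolding M_def by blast
    have dj: "{e\<in>F. v \<in> e} \<inter> {e\<in>M. v \<in> e} = {}" using MF by blast
    have "degree E v = degree F v + degree M v"
      unfolding degree_def un using card_Un_disjoint[OF _ _ dj] finF finM by simp
    then show ?thesis using deg3 degF v by simp
  qed
  have matchM: "matching M" unfolding matching_def
  proof (intro ballI impI)
    fix f g assume fg: "f \<in> M" "g \<in> M" "f \<noteq> g"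
    show "f \<inter> g = {}"
    proof (rule ccontr)
      assume "f \<inter> g \<noteq> {}"
      then obtain z where z: "z \<in> f" "z \<in> g" by blast
      have "z \<in> V" using z fg ME EV by blast
      then have "degree M z = 1" by (rule degM)
      then show False using degree_one[of M z f g] fg z by simp
    qed
  qed
  have UM: "\<Union>M = V"
  proof
    show "\<Union>M \<subseteq> V" using ME EV by blast
    show "V \<subseteq> \<Union>M"
    proof
      fix v assume "v \<in> V"
      then have "degree M v \<ge> 1" using degM by simp
      then have "\<exists>f\<in>M. v \<in> f" by (rule degree_edge)
      then show "v \<in> \<Union>M" by blast
    qed
  qed
  have cM: "card M = n" using matching_card[OF matchM tsM finM] UM cV by simp
  have three: "card (gcomp F c) \<ge> 3" if cV': "c \<in> V" for c
  proof -
    have "degree F c = 2" using degF cV' by simp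
    then obtain f g where fg: "f \<in> F" "g \<in> F" "c \<in> f" "c \<in> g" "f \<noteq> g"
      by (rule degree_two_edges)
    obtain a where fa: "f = {c,a}" "c \<noteq> a" using twosets_other[OF tsF fg(1) fg(3)] by blast
    obtain b where gb: "g = {c,b}" "c \<noteq> b" using twosets_other[OF tsF fg(2) fg(4)] by blast
    have ab: "a \<noteq> b"
    proof
      assume "a = b" then show False using fa(1) gb(1) fg(5) by simp
    qed
    have "{c,a} \<in> F" using fg(1) fa(1) by simp
    from comp_step[OF comp_self this] have "a \<in> gcomp F c" .
    moreover have "{c,b} \<in> F" using fg(2) gb(1) by simp
    from comp_step[OF comp_self this] have "b \<in> gcomp F c" .
    ultimately have sub: "{c,a,b} \<subseteq> gcomp F c" using comp_self[of c F] by simp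
    have "finite (gcomp F c)" using finite_subset[OF compF(2)[OF cV'] finV] .
    then have "card {c,a,b} \<le> card (gcomp F c)" using card_mono sub by blast
    then show ?thesis using fa gb ab by simp
  qed
  have n3: "n \<ge> 3"
  proof -
    have "card C1 \<ge> 3" "card C2 \<ge> 3" using three c1 c2 by auto
    moreover have "card (C1 \<union> C2) = card C1 + card C2" using card_Un_disjoint[OF finC disjC] .
    moreover have "card (C1 \<union> C2) \<le> card V" using card_mono[OF finV] C1V C2V by simp
    ultimately show ?thesis using cV by linarith
  qed
  have kmP: "k_matching E (n-1) P1" "k_matching E (n-1) P2"
    using PH HF FE cP1 cP2 unfolding k_matching_def matching_def by auto
  have e1E: "e1' \<in> E" "e2' \<in> E" using e1F FE by auto
  have e1M: "e1' \<notin> M" "e2' \<notin> M" using e1F MF by auto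
  have EFM: "E = H \<union> {e1', e2'} \<union> M" unfolding H_def M_def using e1F FE by blast
  have km_ins: "k_matching E (n-1) (insert e K)"
    if K: "K \<subseteq> M" "\<forall>h\<in>K. e \<inter> h = {}" "card K = n - 2" and e: "e \<in> E" "e \<notin> M" for e K
  proof -
    have "matching (insert e K)" using matching_insert[OF matching_sub[OF matchM K(1)] K(2)] .
    moreover have "card (insert e K) = n - 1"
      using K e finite_subset[OF K(1) finM] n3 by (subst card_insert_disjoint) auto
    moreover have "insert e K \<subseteq> E" using K(1) ME e by blast
    ultimately show ?thesis unfolding k_matching_def matching_def by blast
  qed
  show ?thesis
  proof (cases "\<exists>g\<in>M. g \<inter> e1' \<noteq> {} \<and> g \<inter> e2' \<noteq> {}")
    case False
    define A where "A = insert e1' {f\<in>M. f \<inter> e1' = {}}"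
    define B where "B = insert e2' {f\<in>M. f \<inter> e2' = {}}"
    have c1V: "c1 \<in> V" "y1 \<in> V" "c2 \<in> V" "y2 \<in> V" using y1C y2C c1C c2C C1V C2V by auto
    have n1M: "{c1,y1} \<notin> M" "{c2,y2} \<notin> M" using e1M unfolding e1'_def e2'_def .
    have "card {f\<in>M. f \<inter> {c1,y1} = {}} = card M - 2"
      using edge_remove_card[OF tsM finM degM[OF c1V(1)] degM[OF c1V(2)] e1(2) n1M(1)] .
    then have cA: "card {f\<in>M. f \<inter> e1' = {}} = n - 2" using cM unfolding e1'_def by simp
    have "card {f\<in>M. f \<inter> {c2,y2} = {}} = card M - 2"
      using edge_remove_card[OF tsM finM degM[OF c1V(3)] degM[OF c1V(4)] e2(2) n1M(2)] .
    then have cB: "card {f\<in>M. f \<inter> e2' = {}} = n - 2" using cM unfolding e2'_def by simp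
    have sA: "{f\<in>M. f \<inter> e1' = {}} \<subseteq> M" "\<forall>h\<in>{f\<in>M. f \<inter> e1' = {}}. e1' \<inter> h = {}" by blast+
    have sB: "{f\<in>M. f \<inter> e2' = {}} \<subseteq> M" "\<forall>h\<in>{f\<in>M. f \<inter> e2' = {}}. e2' \<inter> h = {}" by blast+
    have kA: "k_matching E (n-1) A" unfolding A_def using km_ins[OF sA cA e1E(1) e1M(1)] .
    have kB: "k_matching E (n-1) B" unfolding B_def using km_ins[OF sB cB e1E(2) e1M(2)] .
    have "P1 \<union> P2 \<union> A \<union> B = E"
    proof
      have "P1 \<subseteq> E" "P2 \<subseteq> E" "A \<subseteq> E" "B \<subseteq> E"
        using kmP kA kB unfolding k_matching_def by simp_all
      then show "P1 \<union> P2 \<union> A \<union> B \<subseteq> E" by blast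
      show "E \<subseteq> P1 \<union> P2 \<union> A \<union> B"
      proof
        fix e assume "e \<in> E"
        then have "e \<in> H \<union> {e1', e2'} \<union> M" using EFM by simp
        then have "e \<in> H \<or> e = e1' \<or> e = e2' \<or> e \<in> M" by auto
        then show "e \<in> P1 \<union> P2 \<union> A \<union> B"
        proof (elim disjE)
          assume "e \<in> H" then show ?thesis using PH(3) by blast
        next
          assume "e = e1'" then show ?thesis unfolding A_def by blast
        next
          assume "e = e2'" then show ?thesis unfolding B_def by blast
        next
          assume eM: "e \<in> M"
          then have "\<not> (e \<inter> e1' \<noteq> {} \<and> e \<inter> e2' \<noteq> {})" using False by simp
          then have "e \<inter> e1' = {} \<or> e \<inter> e2' = {}" by blast
          then show ?thesis using eM unfolding A_def B_def by blast
        qed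
      qed
    qed
    then show ?thesis using kmP kA kB n3 by blast
  next
    case True
    then obtain g where g: "g \<in> M" "g \<inter> e1' \<noteq> {}" "g \<inter> e2' \<noteq> {}" by blast
    then obtain a b where ab: "a \<in> g" "a \<in> e1'" "b \<in> g" "b \<in> e2'" by blast
    obtain a' where a': "e1' = {a,a'}" using twosets_other[OF tsF e1F(1) ab(2)] by blast
    obtain b' where b': "e2' = {b,b'}" using twosets_other[OF tsF e1F(2) ab(4)] by blast
    have e1V: "e1' \<subseteq> V" "e2' \<subseteq> V" using e1F FV by auto
    have abV: "a \<in> V" "a' \<in> V" "b \<in> V" "b' \<in> V" using e1V a' b' by auto
    let ?R = "{f\<in>M. f \<inter> (e1' \<union> e2') \<noteq> {}}"
    have Rsub: "?R \<subseteq> {g} \<union> {f\<in>M. a' \<in> f} \<union> {f\<in>M. b' \<in> f}"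
    proof
      fix f assume f: "f \<in> ?R"
      then have fM: "f \<in> M" by simp
      from f obtain z where z: "z \<in> f" "z \<in> e1' \<union> e2'" by blast
      then have "z = a \<or> z = a' \<or> z = b \<or> z = b'" using a' b' by auto
      then show "f \<in> {g} \<union> {f\<in>M. a' \<in> f} \<union> {f\<in>M. b' \<in> f}"
      proof (elim disjE)
        assume "z = a"
        then have "f = g" using degree_one[OF degM[OF abV(1)] fM g(1)] z(1) ab(1) by simp
        then show ?thesis by simp
      next
        assume "z = b"
        then have "f = g" using degree_one[OF degM[OF abV(3)] fM g(1)] z(1) ab(3) by simp
        then show ?thesis by simp
      qed (use z fM in simp_all)
    qed
    have cR: "card ?R \<le> 3"
    proof -
      have "card ({g} \<union> {f\<in>M. a' \<in> f} \<union> {f\<in>M. b' \<in> f}) \<le> card ({g} \<union> {f\<in>M. a' \<in> f}) + card {f\<in>M. b' \<in> f}"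
        by (rule card_Un_le)
      also have "\<dots> \<le> card {g} + card {f\<in>M. a' \<in> f} + card {f\<in>M. b' \<in> f}"
        using card_Un_le[of "{g}" "{f\<in>M. a' \<in> f}"] by simp
      also have "\<dots> = 3" using degM[OF abV(2)] degM[OF abV(4)] unfolding degree_def by simp
      finally have "card ({g} \<union> {f\<in>M. a' \<in> f} \<union> {f\<in>M. b' \<in> f}) \<le> 3" .
      moreover have "card ?R \<le> card ({g} \<union> {f\<in>M. a' \<in> f} \<union> {f\<in>M. b' \<in> f})"
        by (rule card_mono[OF _ Rsub]) (use finM in simp)
      ultimately show ?thesis by simp
    qed
    define K0 where "K0 = {f\<in>M. f \<inter> (e1' \<union> e2') = {}}"
    have K0eq: "K0 = M - ?R" unfolding K0_def by blast
    have K0M: "K0 \<subseteq> M" unfolding K0_def by blast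
    have finK0: "finite K0" using finite_subset[OF K0M finM] .
    have cK0: "card K0 \<ge> n - 3"
    proof -
      have "card K0 = card M - card ?R" unfolding K0eq by (rule card_Diff_subset) (use finM in auto)
      then show ?thesis using cR cM by simp
    qed
    have n4: "n \<ge> 4"
    proof (rule ccontr)
      assume "\<not> n \<ge> 4"
      then have n3e: "n = 3" using n3 by simp
      have t1: "card C1 \<ge> 3" "card C2 \<ge> 3" using three c1 c2 by auto
      have cu: "card (C1 \<union> C2) = card C1 + card C2" using card_Un_disjoint[OF finC disjC] .
      have CV: "C1 \<union> C2 \<subseteq> V" using C1V C2V by blast
      have "card (C1 \<union> C2) \<le> card V" using card_mono[OF finV CV] .
      then have cc: "card C1 = 3" "card C2 = 3" "card (C1 \<union> C2) = card V"
        using t1 cu cV n3e by linarith+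
      have cover: "C1 \<union> C2 = V" using card_subset_eq[OF finV CV cc(3)] .
      have degM': "\<forall>v\<in>V. degree (E - F) v = 1" using degM unfolding M_def by blast
      obtain F' where F': "two_factor V E F'" "odd_circuits V F' = 0"
        using prism[OF finV FE tsF FV degF EV tsE degM' c1(2) cc(1) c2(2) cc(2) disjC cover] by blast
      have "0 \<in> ?S" by (rule CollectI, rule exI[of _ F']) (simp add: F')
      then have "Min ?S \<le> 0" using Min_le[OF finS] by blast
      then show False using odd2 unfolding oddness_def by simp
    qed
    have "K0 \<noteq> {}" using cK0 n4 by (metis card.empty diff_is_0_eq not_less_eq_eq numeral_3_eq_3 numeral_eq_Suc pred_numeral_simps(2) semiring_norm(26) semiring_norm(27) le_zero_eq)
    then obtain m where m: "m \<in> K0" by blast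
    have mM: "m \<in> M" using m K0M by blast
    have cX: "card (K0 - {m}) \<ge> n - 4" using cK0 m finK0 by (simp add: card_Diff_singleton)
    obtain T where T: "T \<subseteq> K0 - {m}" "card T = n - 4" "finite T"
      using obtain_subset_with_card_n[OF cX] by blast
    define A where "A = insert e1' (insert e2' (insert m T))"
    define B where "B = M - {m}"
    have TM: "T \<subseteq> M" using T(1) K0M by blast
    have mT: "m \<notin> T" using T(1) by blast
    have cA: "card A = n - 1"
    proof -
      have "card (insert m T) = n - 3" using T mT n4 by simp
      moreover have "e2' \<notin> insert m T" using e1M TM mM by blast
      moreover have "e1' \<notin> insert e2' (insert m T)" using e1M TM mM e1ne by blast
      ultimately show ?thesis unfolding A_def using T(3) n4 by simp
    qed
    have dK0: "\<forall>h\<in>insert m T. e1' \<inter> h = {} \<and> e2' \<inter> h = {}"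
      using T(1) m unfolding K0_def by blast
    have mA: "matching A" unfolding A_def
    proof (rule matching_insert)
      have mm: "matching (insert m T)" using matching_sub[OF matchM] TM mM by simp
      show "matching (insert e2' (insert m T))"
        by (rule matching_insert[OF mm]) (use dK0 in blast)
      show "\<forall>h\<in>insert e2' (insert m T). e1' \<inter> h = {}" using dK0 e12 by blast
    qed
    have kA: "k_matching E (n-1) A"
    proof -
      have "A \<subseteq> E" unfolding A_def using e1E TM mM ME by blast
      then show ?thesis using cA mA unfolding k_matching_def matching_def by blast
    qed
    have kB: "k_matching E (n-1) B"
    proof -
      have "B \<subseteq> E" unfolding B_def using ME by blast
      moreover have "card B = n - 1" unfolding B_def using cM mM finM by simp
      moreover have "matching B" unfolding B_def using matching_sub[OF matchM] by blast
      ultimately show ?thesis unfolding k_matching_def matching_def by blast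
    qed
    have "P1 \<union> P2 \<union> A \<union> B = E"
    proof
      have "P1 \<subseteq> E" "P2 \<subseteq> E" "A \<subseteq> E" "B \<subseteq> E"
        using kmP kA kB unfolding k_matching_def by simp_all
      then show "P1 \<union> P2 \<union> A \<union> B \<subseteq> E" by blast
      show "E \<subseteq> P1 \<union> P2 \<union> A \<union> B"
      proof
        fix e assume "e \<in> E"
        then have "e \<in> H \<union> {e1', e2'} \<union> M" using EFM by simp
        then have "e \<in> H \<or> e = e1' \<or> e = e2' \<or> e \<in> M" by auto
        then show "e \<in> P1 \<union> P2 \<union> A \<union> B"
        proof (elim disjE)
          assume "e \<in> H" then show ?thesis using PH(3) by blast
        next
          assume "e = e1'" then show ?thesis unfolding A_def by blast
        next
          assume "e = e2'" then show ?thesis unfolding A_def by blast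
        next
          assume eM: "e \<in> M"
          then show ?thesis unfolding A_def B_def by blast
        qed
      qed
    qed
    then show ?thesis using kmP kA kB n3 by blast
  qed
qed


theorem proposition6:
  fixes V :: "'a set" and E :: "'a set set" and n :: nat
  assumes "cubic_graph V E"
    and "card V = 2 * n"
    and "has_two_factor V E"
    and "oddness V E = 2"
  shows "excessive_index E (n - 1) = 4"
proof -
  obtain P1 P2 A B where n3: "n \<ge> 3" and k: "k_matching E (n-1) P1" "k_matching E (n-1) P2"
    "k_matching E (n-1) A" "k_matching E (n-1) B" and U: "P1 \<union> P2 \<union> A \<union> B = E"
    using cover_exists[OF assms] by blast
  have sg: "simple_graph V E" and deg3: "\<forall>v\<in>V. degree E v = 3"
    using assms(1) unfolding cubic_graph_def by auto
  have finV: "finite V" using sg unfolding simple_graph_def by auto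
  have sg2: "\<forall>e\<in>E. \<exists>u v. e = {u, v} \<and> u \<noteq> v \<and> u \<in> V \<and> v \<in> V"
    using sg unfolding simple_graph_def by auto
  have EV: "\<forall>e\<in>E. e \<subseteq> V"
  proof
    fix e assume "e \<in> E"
    then obtain u v where "e = {u, v}" "u \<in> V" "v \<in> V" using sg2 by blast
    then show "e \<subseteq> V" by simp
  qed
  have tsE: "twosets E" unfolding twosets_def
  proof
    fix e assume "e \<in> E"
    then obtain u v where "e = {u, v}" "u \<noteq> v" using sg2 by blast
    then show "\<exists>u v. e = {u, v} \<and> u \<noteq> v" by blast
  qed
  have sumE: "sum (degree E) V = sum (\<lambda>_. 3) V" using deg3 by (intro sum.cong) auto
  have cE: "card E = 3 * n" using handshake[OF finV EV tsE] sumE assms(2) by simp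
  let ?P = "\<lambda>m. \<exists>\<M>. finite \<M> \<and> card \<M> = m \<and> (\<forall>M\<in>\<M>. k_matching E (n-1) M) \<and> \<Union>\<M> = E"
  have all: "\<forall>e\<in>E. \<exists>M. k_matching E (n-1) M \<and> e \<in> M"
  proof
    fix e assume "e \<in> E"
    then have "e \<in> P1 \<or> e \<in> P2 \<or> e \<in> A \<or> e \<in> B" using U by blast
    then show "\<exists>M. k_matching E (n-1) M \<and> e \<in> M" using k by blast
  qed
  have L: "(LEAST m. ?P m) = 4"
  proof (rule Least_equality)
    let ?M = "{P1, P2, A, B}"
    have fin: "finite ?M" by simp
    have km: "\<forall>M\<in>?M. k_matching E (n-1) M" using k by blast
    have un: "\<Union>?M = E" using U by blast
    have "card ?M \<le> 4" by (rule order_trans[OF card_insert_le_m1]) (auto simp: card_insert_le_m1)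
    moreover have "card ?M \<ge> 4" using lower_bound[OF cE _ fin km un] n3 by simp
    ultimately have "card ?M = 4" by simp
    then show "?P 4" using fin km un by blast
  next
    fix m assume "?P m"
    then obtain \<M> where "finite \<M>" "card \<M> = m" "\<forall>M\<in>\<M>. k_matching E (n-1) M" "\<Union>\<M> = E" by blast
    then show "4 \<le> m" using lower_bound[OF cE, of \<M>] n3 by simp
  qed
  show ?thesis unfolding excessive_index_def using all L by (simp add: numeral_eq_enat)
qed


end
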